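(* Let $M_1$ and $M_2$ be matroids on a common ground set $E$ with the same rank $r$, and let $B$ be a common basis of $M_1$ and $M_2$. Then $D_{M_1,M_2}(B)$ is strongly connected if and only if $r_{M_1}(X)+r_{M_2}(E\setminus X)>r$ for every $X$ with $\emptyset\neq X\subsetneq E$.
   Context: $r_{M}$ denotes the rank function of $M$. The digraph $D_{M_1,M_2}(B)$ has vertex set $E$; for each $x\in B$, $y\in E\setminus B$ it has an arc $xy$ if $B-x+y$ is a basis of $M_1$, and an arc $yx$ if $B-x+y$ is a basis of $M_2$. *)

theory Defs
  imports Main
begin

definition matroid :: "'a set \<Rightarrow> ('a set \<Rightarrow> bool) \<Rightarrow> bool" where
  "matroid E indep \<longleftrightarrow>
     finite E \<and>
     (\<forall>X. indep X \<longrightarrow> X \<subseteq> E) \<and>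
     indep {} \<and>
     (\<forall>X Y. indep X \<and> Y \<subseteq> X \<longrightarrow> indep Y) \<and>
     (\<forall>X Y. indep X \<and> indep Y \<and> card X < card Y \<longrightarrow>
        (\<exists>y \<in> Y - X. indep (insert y X)))"

definition basis :: "'a set \<Rightarrow> ('a set \<Rightarrow> bool) \<Rightarrow> 'a set \<Rightarrow> bool" where
  "basis E indep B \<longleftrightarrow> indep B \<and> B \<subseteq> E \<and>
     (\<forall>C. indep C \<and> B \<subseteq> C \<and> C \<subseteq> E \<longrightarrow> C = B)"

definition rank :: "('a set \<Rightarrow> bool) \<Rightarrow> 'a set \<Rightarrow> nat" where
  "rank indep X = Max {card Y | Y. Y \<subseteq> X \<and> indep Y}"

definition exchange_graph ::
  "'a set \<Rightarrow> ('a set \<Rightarrow> bool) \<Rightarrow> ('a set \<Rightarrow> bool) \<Rightarrow> 'a set \<Rightarrow> ('a \<times> 'a) set" where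
  "exchange_graph E indep1 indep2 B =
     {(x, y). x \<in> B \<and> y \<in> E - B \<and> basis E indep1 (insert y (B - {x}))} \<union>
     {(y, x). x \<in> B \<and> y \<in> E - B \<and> basis E indep2 (insert y (B - {x}))}"

definition strongly_connected :: "'a set \<Rightarrow> ('a \<times> 'a) set \<Rightarrow> bool" where
  "strongly_connected V A \<longleftrightarrow> (\<forall>u \<in> V. \<forall>v \<in> V. (u, v) \<in> A\<^sup>*)"

end

theory Submission
  imports Defs
begin

lemma m_fin: "matroid E ind \<Longrightarrow> ind Y \<Longrightarrow> finite Y"
  unfolding matroid_def by (meson finite_subset)

lemma m_sub: "matroid E ind \<Longrightarrow> ind Y \<Longrightarrow> Y \<subseteq> E"
  unfolding matroid_def by blast

lemma m_down: "matroid E ind \<Longrightarrow> ind Y \<Longrightarrow> Z \<subseteq> Y \<Longrightarrow> ind Z"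
  unfolding matroid_def by blast

lemma m_aug: "matroid E ind \<Longrightarrow> ind X \<Longrightarrow> ind Y \<Longrightarrow> card X < card Y \<Longrightarrow> \<exists>y\<in>Y - X. ind (insert y X)"
  unfolding matroid_def by blast

lemma rank_fin: assumes "matroid E ind" shows "finite {card Y | Y. Y \<subseteq> X \<and> ind Y}"
proof -
  have "{card Y | Y. Y \<subseteq> X \<and> ind Y} \<subseteq> {..card E}"
  proof
    fix n assume "n \<in> {card Y | Y. Y \<subseteq> X \<and> ind Y}"
    then obtain Y where "n = card Y" "ind Y" by blast
    moreover have "finite E" using assms unfolding matroid_def by blast
    ultimately show "n \<in> {..card E}" using m_sub[OF assms] by (simp add: card_mono)
  qed
  thus ?thesis using finite_subset by blast
qed

lemma rank_ge: assumes "matroid E ind" "Y \<subseteq> X" "ind Y" shows "card Y \<le> rank ind X"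
  unfolding rank_def using rank_fin[OF assms(1)] assms by (intro Max_ge) auto

lemma rank_le: assumes "matroid E ind" "\<And>Y. Y \<subseteq> X \<Longrightarrow> ind Y \<Longrightarrow> card Y \<le> k"
  shows "rank ind X \<le> k"
proof -
  have "ind {}" using assms(1) unfolding matroid_def by blast
  hence ne: "{card Y | Y. Y \<subseteq> X \<and> ind Y} \<noteq> {}" by blast
  show ?thesis unfolding rank_def using rank_fin[OF assms(1)] ne assms(2)
    by (subst Max_le_iff) auto
qed

lemma basis_card: assumes "matroid E ind" "basis E ind B" shows "card B = rank ind E"
proof (rule antisym)
  have "ind B" "B \<subseteq> E" using assms(2) unfolding basis_def by auto
  thus "card B \<le> rank ind E" using rank_ge[OF assms(1)] by simp
  show "rank ind E \<le> card B"
  proof (rule rank_le[OF assms(1)])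
    fix Y assume Y: "Y \<subseteq> E" "ind Y"
    show "card Y \<le> card B"
    proof (rule ccontr)
      assume "\<not> card Y \<le> card B"
      then obtain y where y: "y \<in> Y - B" "ind (insert y B)"
        using m_aug[OF assms(1), of B Y] assms(2) Y unfolding basis_def by auto
      moreover have "insert y B \<subseteq> E" using y Y assms(2) unfolding basis_def by blast
      ultimately have "insert y B = B" using assms(2) unfolding basis_def by blast
      thus False using y by blast
    qed
  qed
qed

lemma card_basis: assumes "matroid E ind" "ind C" "card C = rank ind E" shows "basis E ind C"
  unfolding basis_def
proof (intro conjI allI impI)
  show "ind C" by fact
  show "C \<subseteq> E" using m_sub assms by blast
  fix D assume D: "ind D \<and> C \<subseteq> D \<and> D \<subseteq> E"
  hence "card D \<le> card C" using rank_ge[OF assms(1), of D E] assms(3) by auto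
  moreover have "finite D" using D m_fin[OF assms(1)] by blast
  ultimately show "D = C" using D card_seteq[of D C] by blast
qed

lemma augment: assumes "matroid E ind" "ind I" "ind S"
  shows "card I \<le> k \<Longrightarrow> k \<le> card S \<Longrightarrow> \<exists>J. ind J \<and> I \<subseteq> J \<and> J \<subseteq> I \<union> S \<and> card J = k"
proof (induction k)
  case 0
  thus ?case using assms by auto
next
  case (Suc k)
  show ?case
  proof (cases "card I = Suc k")
    case True thus ?thesis using assms by auto
  next
    case False
    then obtain J where J: "ind J" "I \<subseteq> J" "J \<subseteq> I \<union> S" "card J = k"
      using Suc by auto
    then obtain y where y: "y \<in> S - J" "ind (insert y J)"
      using m_aug[OF assms(1) J(1) assms(3)] Suc by auto
    have "card (insert y J) = Suc k" using y J m_fin[OF assms(1)] by auto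
    thus ?thesis using y J by (intro exI[of _ "insert y J"]) auto
  qed
qed

lemma rank_le_B:
  assumes m: "matroid E ind" and b: "basis E ind B"
    and no: "\<forall>x\<in>B - X. \<forall>y\<in>X - B. \<not> basis E ind (insert y (B - {x}))"
  shows "rank ind X \<le> card (B \<inter> X)"
proof (rule rank_le[OF m])
  fix Y assume Y: "Y \<subseteq> X" "ind Y"
  show "card Y \<le> card (B \<inter> X)"
  proof (rule ccontr)
    assume "\<not> card Y \<le> card (B \<inter> X)"
    moreover have iB: "ind B" "B \<subseteq> E" using b unfolding basis_def by auto
    moreover have "ind (B \<inter> X)" using m_down[OF m iB(1)] by blast
    ultimately obtain y where y: "y \<in> Y - (B \<inter> X)" "ind (insert y (B \<inter> X))"
      using m_aug[OF m _ Y(2)] by (metis linorder_not_le)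
    have yX: "y \<in> X" "y \<notin> B" using y Y by auto
    have finB: "finite B" using m_fin[OF m iB(1)] .
    let ?I = "insert y (B \<inter> X)"
    have "card ?I \<le> card B" using rank_ge[OF m _ y(2), of E] basis_card[OF m b] m_sub[OF m y(2)] by auto
    then obtain J where J: "ind J" "?I \<subseteq> J" "J \<subseteq> ?I \<union> B" "card J = card B"
      using augment[OF m y(2) iB(1)] by blast
    have finJ: "finite J" using m_fin[OF m J(1)] .
    have "\<not> B \<subseteq> J"
    proof
      assume "B \<subseteq> J"
      hence "insert y B \<subseteq> J" using J by auto
      hence "card (insert y B) \<le> card J" using finJ card_mono by blast
      thus False using J(4) yX finB by auto
    qed
    then obtain x where x: "x \<in> B" "x \<notin> J" by blast
    have xX: "x \<notin> X" using x J by auto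
    have sub: "J \<subseteq> insert y (B - {x})" using J x by auto
    have "card (insert y (B - {x})) = card B" using x yX finB
      by (simp add: card_Diff_singleton) (metis Suc_pred card_gt_0_iff empty_iff)
    hence "J = insert y (B - {x})" using sub J(4) finB by (intro card_seteq) auto
    hence "basis E ind (insert y (B - {x}))"
      using card_basis[OF m J(1)] J(4) basis_card[OF m b] by simp
    thus False using no x xX yX by blast
  qed
qed

lemma path_cross: "(u, v) \<in> A\<^sup>* \<Longrightarrow> u \<notin> X \<Longrightarrow> v \<in> X \<Longrightarrow> \<exists>a b. (a, b) \<in> A \<and> a \<notin> X \<and> b \<in> X"
proof (induction rule: rtrancl_induct)
  case base thus ?case by simp
next
  case (step y z)
  thus ?case by (cases "y \<in> X") auto
qed

theorem lemma3p12:
  fixes E :: "'a set" and indep1 indep2 :: "'a set \<Rightarrow> bool" and B :: "'a set" and r :: nat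
  assumes "matroid E indep1" and "matroid E indep2"
    and "rank indep1 E = r" and "rank indep2 E = r"
    and "basis E indep1 B" and "basis E indep2 B"
  shows "strongly_connected E (exchange_graph E indep1 indep2 B) \<longleftrightarrow>
         (\<forall>X. X \<noteq> {} \<and> X \<subset> E \<longrightarrow> rank indep1 X + rank indep2 (E - X) > r)"
proof -
  let ?A = "exchange_graph E indep1 indep2 B"
  have cB: "card B = r" using basis_card[OF assms(1,5)] assms(3) by simp
  have BE: "B \<subseteq> E" using assms(5) unfolding basis_def by auto
  have finE: "finite E" using assms(1) unfolding matroid_def by auto
  have finB: "finite B" using BE finE finite_subset by blast
  have split: "card (B \<inter> X) + card (B - X) = card B" for X
    using card_Int_Diff[OF finB, of X] by simp
  have AE: "(a, b) \<in> ?A \<Longrightarrow> a \<in> E \<and> b \<in> E" for a b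
    unfolding exchange_graph_def using BE by auto
  show ?thesis
  proof
    assume sc: "strongly_connected E ?A"
    show "\<forall>X. X \<noteq> {} \<and> X \<subset> E \<longrightarrow> rank indep1 X + rank indep2 (E - X) > r"
    proof (intro allI impI)
      fix X assume X: "X \<noteq> {} \<and> X \<subset> E"
      then obtain u v where uv: "u \<in> E" "u \<notin> X" "v \<in> X" by blast
      hence "(u, v) \<in> ?A\<^sup>*" using sc X unfolding strongly_connected_def by blast
      then obtain a b where ab: "(a, b) \<in> ?A" "a \<notin> X" "b \<in> X"
        using path_cross[OF _ uv(2) uv(3)] by blast
      have i1: "indep1 B" "indep2 B" using assms(5,6) unfolding basis_def by auto
      have "indep1 (B \<inter> X)" using m_down[OF assms(1) i1(1), of "B \<inter> X"] by simp
      hence r1: "card (B \<inter> X) \<le> rank indep1 X"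
        using rank_ge[OF assms(1), of "B \<inter> X" X] by simp
      have "indep2 (B - X)" using m_down[OF assms(2) i1(2), of "B - X"] by simp
      moreover have "B - X \<subseteq> E - X" using BE by blast
      ultimately have r2: "card (B - X) \<le> rank indep2 (E - X)"
        using rank_ge[OF assms(2), of "B - X" "E - X"] by simp
      from ab(1) show "rank indep1 X + rank indep2 (E - X) > r"
        unfolding exchange_graph_def
      proof
        assume "(a, b) \<in> {(x, y). x \<in> B \<and> y \<in> E - B \<and> basis E indep1 (insert y (B - {x}))}"
        hence h: "a \<in> B" "b \<notin> B" "indep1 (insert b (B - {a}))" unfolding basis_def by auto
        have "insert b (B \<inter> X) \<subseteq> insert b (B - {a})" using ab by blast
        hence "indep1 (insert b (B \<inter> X))" using m_down[OF assms(1) h(3)] by simp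
        moreover have "insert b (B \<inter> X) \<subseteq> X" using ab by blast
        ultimately have "card (insert b (B \<inter> X)) \<le> rank indep1 X" using rank_ge[OF assms(1)] by simp
        hence "Suc (card (B \<inter> X)) \<le> rank indep1 X" using h finB by simp
        thus ?thesis using r2 split[of X] cB by linarith
      next
        assume "(a, b) \<in> {(y, x). x \<in> B \<and> y \<in> E - B \<and> basis E indep2 (insert y (B - {x}))}"
        hence h: "b \<in> B" "a \<notin> B" "a \<in> E" "indep2 (insert a (B - {b}))" unfolding basis_def by auto
        have "insert a (B - X) \<subseteq> insert a (B - {b})" using ab by blast
        hence "indep2 (insert a (B - X))" using m_down[OF assms(2) h(4)] by simp
        moreover have "insert a (B - X) \<subseteq> E - X" using ab h BE by blast
        ultimately have "card (insert a (B - X)) \<le> rank indep2 (E - X)" using rank_ge[OF assms(2)] by simp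
        hence "Suc (card (B - X)) \<le> rank indep2 (E - X)" using h finB by simp
        thus ?thesis using r1 split[of X] cB by linarith
      qed
    qed
  next
    assume H: "\<forall>X. X \<noteq> {} \<and> X \<subset> E \<longrightarrow> rank indep1 X + rank indep2 (E - X) > r"
    have cross: "\<exists>a b. (a, b) \<in> ?A \<and> a \<notin> X \<and> b \<in> X" if X: "X \<noteq> {}" "X \<subset> E" for X
    proof (rule ccontr)
      assume no: "\<not> ?thesis"
      have n1: "\<forall>x\<in>B - X. \<forall>y\<in>X - B. \<not> basis E indep1 (insert y (B - {x}))"
      proof (intro ballI notI)
        fix x y assume xy: "x \<in> B - X" "y \<in> X - B" "basis E indep1 (insert y (B - {x}))"
        have "y \<in> E" using xy(3) unfolding basis_def by blast
        hence "(x, y) \<in> ?A" using xy unfolding exchange_graph_def by blast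
        thus False using no xy by blast
      qed
      have n2: "\<forall>x\<in>B - (E - X). \<forall>y\<in>(E - X) - B. \<not> basis E indep2 (insert y (B - {x}))"
      proof (intro ballI notI)
        fix x y assume xy: "x \<in> B - (E - X)" "y \<in> (E - X) - B" "basis E indep2 (insert y (B - {x}))"
        hence yx: "(y, x) \<in> ?A" unfolding exchange_graph_def by blast
        have "x \<in> X" "y \<notin> X" using xy(1,2) BE by (auto simp: subset_iff)
        thus False using no yx by blast
      qed
      have "rank indep1 X \<le> card (B \<inter> X)" using rank_le_B[OF assms(1,5) n1] .
      moreover have "rank indep2 (E - X) \<le> card (B \<inter> (E - X))" using rank_le_B[OF assms(2,6) n2] .
      moreover have "B \<inter> (E - X) = B - X" using BE by auto
      ultimately have "rank indep1 X + rank indep2 (E - X) \<le> r" using split[of X] cB by simp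
      moreover have "rank indep1 X + rank indep2 (E - X) > r" using H X by simp
      ultimately show False by linarith
    qed
    show "strongly_connected E ?A" unfolding strongly_connected_def
    proof (intro ballI)
      fix u v assume u: "u \<in> E" and v: "v \<in> E"
      let ?X = "{w \<in> E. (w, v) \<in> ?A\<^sup>*}"
      have "?X = E"
      proof (rule ccontr)
        assume "?X \<noteq> E"
        hence ps: "?X \<subset> E" by auto
        have ne: "?X \<noteq> {}" using v by auto
        obtain a b where ab: "(a, b) \<in> ?A" "a \<notin> ?X" "b \<in> ?X" using cross[OF ne ps] by (elim exE conjE)
        have "(b, v) \<in> ?A\<^sup>*" using ab(3) by blast
        hence "(a, v) \<in> ?A\<^sup>*" using converse_rtrancl_into_rtrancl[OF ab(1)] by blast
        moreover have "a \<in> E" using AE ab(1) by blast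
        ultimately show False using ab(2) by blast
      qed
      thus "(u, v) \<in> ?A\<^sup>*" using u by blast
    qed
  qed
qed

end
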